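(* Let $t\le k$ and $n$ be positive integers. If there exists an orthogonal array OA$(t,k,n)$, then there exists a large set of orthogonal arrays LOA$(t,k,n)$.
   Context: An orthogonal array OA$(t,k,n)$ is an $n^t\times k$ matrix with entries from $\mathbb{Z}_n$ such that in the submatrix formed by any $t$ columns each ordered $t$-tuple over $\mathbb{Z}_n$ occurs exactly once as a row. A large set of orthogonal arrays LOA$(t,k,n)$ is a set of $n^{k-t}$ orthogonal arrays OA$(t,k,n)$ such that each vector of length $k$ over $\mathbb{Z}_n$ occurs as a row in exactly one of them. *)

theory Defs
  imports Main
begin

definition zn_vec :: "nat \<Rightarrow> nat \<Rightarrow> nat list \<Rightarrow> bool" where
  "zn_vec n l v \<longleftrightarrow> length v = l \<and> (\<forall>x\<in>set v. x < n)"

definition is_OA :: "nat \<Rightarrow> nat \<Rightarrow> nat \<Rightarrow> nat list list \<Rightarrow> bool" where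
  "is_OA t k n A \<longleftrightarrow>
     length A = n ^ t \<and>
     (\<forall>r\<in>set A. zn_vec n k r) \<and>
     (\<forall>cs vs. length cs = t \<and> distinct cs \<and> set cs \<subseteq> {..<k} \<and> zn_vec n t vs \<longrightarrow>
        length (filter (\<lambda>r. map (\<lambda>c. r ! c) cs = vs) A) = 1)"

definition is_LOA :: "nat \<Rightarrow> nat \<Rightarrow> nat \<Rightarrow> nat list list list \<Rightarrow> bool" where
  "is_LOA t k n L \<longleftrightarrow>
     length L = n ^ (k - t) \<and>
     (\<forall>A\<in>set L. is_OA t k n A) \<and>
     (\<forall>v. zn_vec n k v \<longrightarrow> card {j. j < length L \<and> v \<in> set (L ! j)} = 1)"

end

theory Submission
  imports Defs
begin

lemma mod2: fixes m n :: nat assumes "m < 2*n" shows "m mod n = (if m < n then m else m - n)"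
  using assms by (simp add: mod_if le_mod_geq)

lemma modlem: fixes x a v n :: nat assumes "x < n" "v < n" "a < n"
  shows "((x + a) mod n = v) \<longleftrightarrow> (a = (v + n - x) mod n)"
  using assms by (simp add: mod2) arith

definition tr :: "nat \<Rightarrow> nat \<Rightarrow> nat \<Rightarrow> nat list \<Rightarrow> nat list \<Rightarrow> nat list" where
  "tr n t k w r = map (\<lambda>i. if i < t then r!i else (r!i + w!(i-t)) mod n) [0..<k]"

lemma map_eq_pw: "length cs = t \<Longrightarrow> length vs = t \<Longrightarrow>
   (map g cs = vs) = (\<forall>j<t. g (cs!j) = vs!j)"
  by (auto simp: list_eq_iff_nth_eq)

lemma OA_tr:
  assumes A: "is_OA t k n A" and n: "0 < n" and lw: "length w = k - t" and ew: "\<forall>x\<in>set w. x < n"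
  shows "is_OA t k n (map (tr n t k w) A)"
proof -
  have rows: "\<And>r. r \<in> set A \<Longrightarrow> length r = k \<and> (\<forall>i<k. r!i < n)"
    using A unfolding is_OA_def zn_vec_def by (metis nth_mem)
  have wi: "\<And>i. i < k - t \<Longrightarrow> w!i < n" using ew lw by (simp add: all_set_conv_all_nth)
  have "\<forall>r\<in>set (map (tr n t k w) A). zn_vec n k r"
  proof
    fix r assume "r \<in> set (map (tr n t k w) A)"
    then obtain r' where r': "r' \<in> set A" "r = tr n t k w r'" by auto
    show "zn_vec n k r" unfolding zn_vec_def r'(2) tr_def
      using rows[OF r'(1)] n by auto
  qed
  moreover have "\<forall>cs vs. length cs = t \<and> distinct cs \<and> set cs \<subseteq> {..<k} \<and> zn_vec n t vs \<longrightarrow>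
        length (filter (\<lambda>r. map (\<lambda>c. r ! c) cs = vs) (map (tr n t k w) A)) = 1"
  proof (intro allI impI)
    fix cs vs assume h: "length cs = t \<and> distinct cs \<and> set cs \<subseteq> {..<k} \<and> zn_vec n t vs"
    define vs' where "vs' = map (\<lambda>j. if cs!j < t then vs!j else (vs!j + n - w!(cs!j-t)) mod n) [0..<t]"
    have csk: "\<And>j. j < t \<Longrightarrow> cs!j < k" using h nth_mem by blast
    have vsn: "\<And>j. j < t \<Longrightarrow> vs!j < n" using h unfolding zn_vec_def by (auto simp: all_set_conv_all_nth)
    have lvs: "length vs = t" using h unfolding zn_vec_def by auto
    have z: "zn_vec n t vs'" unfolding zn_vec_def vs'_def using vsn n by auto
    have eq: "(map (\<lambda>c. tr n t k w r ! c) cs = vs) = (map (\<lambda>c. r!c) cs = vs')" if r: "r \<in> set A" for r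
    proof -
      have "(map (\<lambda>c. tr n t k w r ! c) cs = vs) = (\<forall>j<t. tr n t k w r ! (cs!j) = vs!j)"
        using map_eq_pw[of cs t vs] h lvs by simp
      also have "\<dots> = (\<forall>j<t. r ! (cs!j) = vs'!j)"
      proof (intro all_cong1 imp_cong refl)
        fix j assume j: "j < t"
        show "(tr n t k w r ! (cs!j) = vs!j) = (r ! (cs!j) = vs'!j)"
        proof (cases "cs!j < t")
          case True then show ?thesis using j csk[OF j] by (simp add: tr_def vs'_def)
        next
          case False
          have a: "w!(cs!j-t) < n" using wi csk[OF j] False by simp
          have b: "r!(cs!j) < n" using rows[OF r] csk[OF j] by simp
          have "((w!(cs!j-t) + r!(cs!j)) mod n = vs!j) = (r!(cs!j) = (vs!j + n - w!(cs!j-t)) mod n)"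
            using modlem[OF a vsn[OF j] b] .
          then show ?thesis using j csk[OF j] False by (simp add: tr_def vs'_def add.commute)
        qed
      qed
      also have "\<dots> = (map (\<lambda>c. r!c) cs = vs')"
        using map_eq_pw[of cs t vs' "\<lambda>c. r!c"] h by (simp add: vs'_def)
      finally show ?thesis .
    qed
    have "filter (\<lambda>r. map (\<lambda>c. r ! c) cs = vs) (map (tr n t k w) A)
        = map (tr n t k w) (filter (\<lambda>r. map (\<lambda>c. r ! c) cs = vs') A)"
      by (simp add: filter_map o_def eq cong: filter_cong)
    then show "length (filter (\<lambda>r. map (\<lambda>c. r ! c) cs = vs) (map (tr n t k w) A)) = 1"
      using A h z unfolding is_OA_def by simp
  qed
  ultimately show ?thesis using A unfolding is_OA_def by simp
qed

lemma filter_one: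
  assumes "length (filter P xs) = 1"
  obtains x where "x \<in> set xs" "P x" "\<And>y. y \<in> set xs \<Longrightarrow> P y \<Longrightarrow> y = x"
proof -
  from assms obtain x where x: "filter P xs = [x]" by (auto simp: length_Suc_conv)
  then have "set (filter P xs) = {x}" by simp
  then show ?thesis using that by auto
qed

theorem theorem3:
  fixes t k n :: nat
  assumes "0 < t" and "t \<le> k" and "0 < n"
    and "\<exists>A. is_OA t k n A"
  shows "\<exists>L. is_LOA t k n L"
proof -
  obtain A where A: "is_OA t k n A" using assms(4) by blast
  define W where "W = List.n_lists (k-t) [0..<n]"
  define L where "L = map (\<lambda>w. map (tr n t k w) A) W"
  have setW: "\<And>w. w \<in> set W \<longleftrightarrow> length w = k - t \<and> (\<forall>x\<in>set w. x < n)"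
    unfolding W_def set_n_lists by auto
  have dW: "distinct W" unfolding W_def by (simp add: distinct_n_lists)
  have rows: "\<And>r. r \<in> set A \<Longrightarrow> length r = k \<and> (\<forall>i<k. r!i < n)"
    using A unfolding is_OA_def zn_vec_def by (metis nth_mem)
  have "length L = n ^ (k - t)" unfolding L_def W_def by (simp add: length_n_lists)
  moreover have "\<forall>B\<in>set L. is_OA t k n B"
    unfolding L_def using OA_tr[OF A assms(3)] setW by auto
  moreover have "card {j. j < length L \<and> v \<in> set (L ! j)} = 1" if v: "zn_vec n k v" for v
  proof -
    have lv: "length v = k" and vn: "\<And>i. i < k \<Longrightarrow> v!i < n"
      using v unfolding zn_vec_def by (auto simp: all_set_conv_all_nth)
    define P where "P = (\<lambda>r. map (\<lambda>c. r ! c) [0..<t] = take t v)"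
    have "zn_vec n t (take t v)" using v assms(2) unfolding zn_vec_def by (auto dest: in_set_takeD)
    moreover have "length [0..<t] = t \<and> distinct [0..<t] \<and> set [0..<t] \<subseteq> {..<k}" using assms(2) by auto
    ultimately have "length (filter P A) = 1" using A unfolding is_OA_def P_def by blast
    then obtain r0 where r0: "r0 \<in> set A" "P r0" and r0u: "\<And>r. r \<in> set A \<Longrightarrow> P r \<Longrightarrow> r = r0"
      by (rule filter_one) blast
    have r0t: "\<And>i. i < t \<Longrightarrow> r0!i = v!i"
    proof -
      fix i assume i: "i < t"
      have "map (\<lambda>c. r0 ! c) [0..<t] ! i = take t v ! i" using r0(2) unfolding P_def by simp
      then show "r0!i = v!i" using i by simp
    qed
    define w0 where "w0 = map (\<lambda>i. (v!(t+i) + n - r0!(t+i)) mod n) [0..<k-t]"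
    have w0W: "w0 \<in> set W" unfolding setW w0_def using assms(3) by auto
    have key: "v \<in> set (map (tr n t k w) A) \<longleftrightarrow> w = w0" if w: "w \<in> set W" for w
    proof
      assume "v \<in> set (map (tr n t k w) A)"
      then obtain r where r: "r \<in> set A" "v = tr n t k w r" by auto
      have "P r" unfolding P_def
        by (rule nth_equalityI) (use r(2) lv assms(2) in \<open>auto simp: tr_def\<close>)
      then have rr: "r = r0" using r0u r(1) by blast
      have lw: "length w = k - t" and wn: "\<forall>x\<in>set w. x < n" using setW w by auto
      show "w = w0"
      proof (rule nth_equalityI)
        show "length w = length w0" using lw by (simp add: w0_def)
        fix i assume i: "i < length w"
        have vi: "v!(t+i) = (r0!(t+i) + w!i) mod n" using r(2) rr i lw by (simp add: tr_def)
        have "r0!(t+i) < n" using rows[OF r0(1)] i lw by simp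
        moreover have "w!i < n" using wn i by simp
        ultimately have "w!i = (v!(t+i) + n - r0!(t+i)) mod n"
          using modlem[of "r0!(t+i)" n "v!(t+i)" "w!i"] vi vn[of "t+i"] i lw by simp
        then show "w!i = w0!i" using i lw by (simp add: w0_def)
      qed
    next
      assume ww: "w = w0"
      have "v = tr n t k w0 r0"
      proof (rule nth_equalityI)
        show "length v = length (tr n t k w0 r0)" using lv by (simp add: tr_def)
        fix i assume i: "i < length v"
        show "v!i = tr n t k w0 r0 ! i"
        proof (cases "i < t")
          case True then show ?thesis using r0t i lv by (simp add: tr_def)
        next
          case False
          have e: "w0!(i-t) = (v!i + n - r0!i) mod n" using False i lv nth_upt[of 0 "i-t" "k-t"] by (simp add: w0_def)
          have "r0!i < n" using rows[OF r0(1)] i lv by simp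
          moreover have "(v!i + n - r0!i) mod n < n" using assms(3) by simp
          ultimately have "(r0!i + (v!i + n - r0!i) mod n) mod n = v!i"
            using modlem[of "r0!i" n "v!i" "(v!i + n - r0!i) mod n"] vn i lv by simp
          then show ?thesis using False i lv e by (simp add: tr_def)
        qed
      qed
      then show "v \<in> set (map (tr n t k w) A)" using ww r0(1) by auto
    qed
    obtain j0 where j0: "j0 < length W" "W!j0 = w0" using w0W by (auto simp: in_set_conv_nth)
    have "{j. j < length L \<and> v \<in> set (L ! j)} = {j0}"
    proof -
      have "\<And>j. j < length W \<Longrightarrow> (v \<in> set (L!j)) = (j = j0)"
      proof -
        fix j assume j: "j < length W"
        have "(v \<in> set (L!j)) = (W!j = W!j0)" using key[of "W!j"] j j0 by (simp add: L_def)
        also have "\<dots> = (j = j0)" using nth_eq_iff_index_eq[OF dW j j0(1)] .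
        finally show "(v \<in> set (L!j)) = (j = j0)" .
      qed
      then show ?thesis using j0 by (auto simp: L_def)
    qed
    then show ?thesis by simp
  qed
  ultimately show ?thesis unfolding is_LOA_def by blast
qed

end
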